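(* Let $r$ be a rule. Then: (1) for all terms $s,s',t$ with $s'\in\mathit{ins}(s)$ and $s\rightarrow_r t$, there exists a term $t'\in\mathit{ins}(t)$ with $s'\rightarrow_r t'$ (i.e. $\rightarrow_r$ and $\mathit{ins}$ are compatible); (2) for all goals $\bar s,\bar s',\bar t$ with $\bar s'\in\mathit{mg}(\bar s)$ and $\bar s\leadsto_r\bar t$, there exists a goal $\bar t'\in\mathit{mg}(\bar t)$ with $\bar s'\leadsto_r\bar t'$ (i.e. $\leadsto_r$ and $\mathit{mg}$ are compatible).
   Context: Fix a signature $\Sigma$, a countably infinite set $X$ of variables disjoint from $\Sigma$, and a fresh constant $\square\notin\Sigma\cup X$. Terms are elements of $T(\Sigma,X)$; goals are finite sequences $\langle s_1,\dots,s_n\rangle$ of terms. Substitutions $\theta$ (maps $X\to T(\Sigma,X)$ moving finitely many variables) act homomorphically on terms and elementwise on goals. A term/goal $t$ is an instance of $s$ (and $s$ is more general than $t$) if $t=s\theta$ for some substitution $\theta$. A renaming is a substitution bijective on $X$; a variant is an image under a renaming. $\mathit{mgu}(s,t)$ denotes a most general unifier. Positions $\mathit{Pos}(s)\subseteq\mathbb{N}^*$, subterms $s|_p$ and replacement $s[t]_p$ are as usual. A context is a term over $\Sigma\cup\{\square\}$ and $X$ containing at least one $\square$; $c[t]$ replaces all occurrences of $\square$ by $t$. A goal-context is a sequence $\langle s_1,\dots,s_i,\square,s_{i+1},\dots,s_n\rangle$ of terms with one hole; $\bar c[\bar t]$ replaces $\square$ by the elements of the goal $\bar t$. $\mathit{ins}(s)=\{c[t]\mid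 c \text{ a context}, t \text{ an instance of } s\}$ for terms $s$; $\mathit{mg}(\bar s)=\{\bar c[\bar t]\mid \bar c \text{ a goal-context}, \bar t \text{ a goal more general than } \bar s\}$ for goals $\bar s$. A rule is a pair $(u,\bar v)$ with $u$ a term and $\bar v$ a goal. $s\rightarrow_{(r,p)}t$ iff $r=(u,\langle v\rangle)$ (right-hand side of length one), $p\in\mathit{Pos}(s)$, $s|_p=u\sigma$ for a substitution $\sigma$, and $t=s[v\sigma]_p$; $\rightarrow_r=\bigcup_p\rightarrow_{(r,p)}$. For $\bar s=\langle s_1,\dots,s_n\rangle$ and $1\le i\le n$, $\bar s\leadsto_{(r,\langle i\rangle)}\bar t$ iff for some variant $(u',\langle v_1,\dots,v_m\rangle)$ of $r$ variable-disjoint from $\bar s$, $s_i$ and $u'$ unify, $\eta=\mathit{mgu}(s_i,u')$, and $\bar t=\langle s_1,\dots,s_{i-1},v_1,\dots,v_m,s_{i+1},\dots,s_n\rangle\eta$; $\leadsto_r=\bigcup_i\leadsto_{(r,\langle i\rangle)}$. *)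

theory Defs
  imports Main "HOL-Library.Countable"
begin

text \<open>Terms over function symbols 'f (each symbol usable with any arity) and variables 'v.\<close>
datatype ('f, 'v) "term" = Var 'v | Fun 'f "('f, 'v) term list"

type_synonym ('f, 'v) goal = "('f, 'v) term list"
type_synonym ('f, 'v) rule = "('f, 'v) term \<times> ('f, 'v) term list"

fun vars_term :: "('f, 'v) term \<Rightarrow> 'v set" where
  "vars_term (Var x) = {x}"
| "vars_term (Fun f ts) = (\<Union>t\<in>set ts. vars_term t)"

definition vars_goal :: "('f, 'v) goal \<Rightarrow> 'v set" where
  "vars_goal ss = (\<Union>s\<in>set ss. vars_term s)"

fun subst_apply :: "('f, 'v) term \<Rightarrow> ('v \<Rightarrow> ('f, 'v) term) \<Rightarrow> ('f, 'v) term"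
  (infixl "\<cdot>" 67) where
  "Var x \<cdot> \<sigma> = \<sigma> x"
| "Fun f ts \<cdot> \<sigma> = Fun f (map (\<lambda>t. t \<cdot> \<sigma>) ts)"

definition goal_subst :: "('f, 'v) goal \<Rightarrow> ('v \<Rightarrow> ('f, 'v) term) \<Rightarrow> ('f, 'v) goal" where
  "goal_subst ss \<sigma> = map (\<lambda>s. s \<cdot> \<sigma>) ss"

definition is_subst :: "('v \<Rightarrow> ('f, 'v) term) \<Rightarrow> bool" where
  "is_subst \<sigma> \<longleftrightarrow> finite {x. \<sigma> x \<noteq> Var x}"

definition is_renaming :: "('v \<Rightarrow> ('f, 'v) term) \<Rightarrow> bool" where
  "is_renaming \<rho> \<longleftrightarrow> is_subst \<rho> \<and> (\<exists>\<pi>. bij \<pi> \<and> (\<forall>x. \<rho> x = Var (\<pi> x)))"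

definition is_instance_term :: "('f, 'v) term \<Rightarrow> ('f, 'v) term \<Rightarrow> bool" where
  "is_instance_term t s \<longleftrightarrow> (\<exists>\<theta>. is_subst \<theta> \<and> t = s \<cdot> \<theta>)"

definition is_instance_goal :: "('f, 'v) goal \<Rightarrow> ('f, 'v) goal \<Rightarrow> bool" where
  "is_instance_goal ts ss \<longleftrightarrow> (\<exists>\<theta>. is_subst \<theta> \<and> ts = goal_subst ss \<theta>)"

definition is_mgu :: "('v \<Rightarrow> ('f, 'v) term) \<Rightarrow> ('f, 'v) term \<Rightarrow> ('f, 'v) term \<Rightarrow> bool" where
  "is_mgu \<eta> s t \<longleftrightarrow> is_subst \<eta> \<and> s \<cdot> \<eta> = t \<cdot> \<eta> \<and>
     (\<forall>\<theta>. is_subst \<theta> \<and> s \<cdot> \<theta> = t \<cdot> \<theta> \<longrightarrow>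
        (\<exists>\<delta>. is_subst \<delta> \<and> (\<forall>x. \<theta> x = \<eta> x \<cdot> \<delta>)))"

function poss :: "('f, 'v) term \<Rightarrow> nat list set" where
  "poss (Var x) = {[]}"
| "poss (Fun f ts) = {[]} \<union> (\<Union>(i, t) \<in> set (zip [0..<length ts] ts). (\<lambda>p. i # p) ` poss t)"
  by pat_completeness auto
termination
  by (relation "measure size") (auto dest!: set_zip_rightD intro: less_Suc_eq_le[THEN iffD2] size_list_estimation')

fun subt_at :: "('f, 'v) term \<Rightarrow> nat list \<Rightarrow> ('f, 'v) term" where
  "subt_at t [] = t"
| "subt_at (Fun f ts) (i # p) = subt_at (ts ! i) p"
| "subt_at (Var x) (i # p) = Var x"

fun replace_at :: "('f, 'v) term \<Rightarrow> nat list \<Rightarrow> ('f, 'v) term \<Rightarrow> ('f, 'v) term" where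
  "replace_at t [] s = s"
| "replace_at (Fun f ts) (i # p) s = Fun f (ts[i := replace_at (ts ! i) p s])"
| "replace_at (Var x) (i # p) s = Var x"

text \<open>Contexts: terms over the signature extended by the hole, with at least one hole.\<close>
datatype ('f, 'v) ctxt = Hole | CVar 'v | CFun 'f "('f, 'v) ctxt list"

fun has_hole :: "('f, 'v) ctxt \<Rightarrow> bool" where
  "has_hole Hole = True"
| "has_hole (CVar x) = False"
| "has_hole (CFun f cs) = (\<exists>c\<in>set cs. has_hole c)"

text \<open>Filling replaces all occurrences of the hole.\<close>
fun fill :: "('f, 'v) ctxt \<Rightarrow> ('f, 'v) term \<Rightarrow> ('f, 'v) term" where
  "fill Hole t = t"
| "fill (CVar x) t = Var x"
| "fill (CFun f cs) t = Fun f (map (\<lambda>c. fill c t) cs)"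

definition ins :: "('f, 'v) term \<Rightarrow> ('f, 'v) term set" where
  "ins s = {fill c t | c t. has_hole c \<and> is_instance_term t s}"

text \<open>A goal-context is a pair (prefix, suffix); filling inserts a goal at the hole.\<close>
definition mg :: "('f, 'v) goal \<Rightarrow> ('f, 'v) goal set" where
  "mg ss = {pre @ ts @ post | pre ts post. is_instance_goal ss ts}"

definition rstep_at :: "('f, 'v) rule \<Rightarrow> nat list \<Rightarrow> ('f, 'v) term \<Rightarrow> ('f, 'v) term \<Rightarrow> bool" where
  "rstep_at r p s t \<longleftrightarrow> (\<exists>u v \<sigma>. r = (u, [v]) \<and> p \<in> poss s \<and> is_subst \<sigma> \<and>
      subt_at s p = u \<cdot> \<sigma> \<and> t = replace_at s p (v \<cdot> \<sigma>))"

definition rstep :: "('f, 'v) rule \<Rightarrow> ('f, 'v) term \<Rightarrow> ('f, 'v) term \<Rightarrow> bool" where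
  "rstep r s t \<longleftrightarrow> (\<exists>p. rstep_at r p s t)"

text \<open>Narrowing step at (1-based) goal position i.\<close>
definition nstep_at :: "('f, 'v) rule \<Rightarrow> nat \<Rightarrow> ('f, 'v) goal \<Rightarrow> ('f, 'v) goal \<Rightarrow> bool" where
  "nstep_at r i ss ts \<longleftrightarrow> 1 \<le> i \<and> i \<le> length ss \<and>
     (\<exists>\<rho> \<eta>. is_renaming \<rho> \<and>
        (vars_term (fst r \<cdot> \<rho>) \<union> vars_goal (goal_subst (snd r) \<rho>)) \<inter> vars_goal ss = {} \<and>
        is_mgu \<eta> (ss ! (i - 1)) (fst r \<cdot> \<rho>) \<and>
        ts = goal_subst (take (i - 1) ss @ goal_subst (snd r) \<rho> @ drop i ss) \<eta>)"

definition nstep :: "('f, 'v) rule \<Rightarrow> ('f, 'v) goal \<Rightarrow> ('f, 'v) goal \<Rightarrow> bool" where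
  "nstep r ss ts \<longleftrightarrow> (\<exists>i. nstep_at r i ss ts)"

end

theory Submission
  imports Defs
begin


lemma subst_subst: "t \<cdot> \<sigma> \<cdot> \<tau> = t \<cdot> (\<lambda>x. \<sigma> x \<cdot> \<tau>)"
  by (induction t) auto

lemma subst_cong: "(\<And>x. x \<in> vars_term t \<Longrightarrow> \<sigma> x = \<tau> x) \<Longrightarrow> t \<cdot> \<sigma> = t \<cdot> \<tau>"
  by (induction t) auto

lemma vars_subst: "vars_term (t \<cdot> \<sigma>) = (\<Union>x\<in>vars_term t. vars_term (\<sigma> x))"
  by (induction t) auto

lemma finite_vars: "finite (vars_term t)" by (induction t) auto

lemma subst_Var[simp]: "t \<cdot> Var = t" by (induction t) (auto simp: map_idI)

lemma poss_Fun: "poss (Fun f ts) = insert [] {i # p | i p. i < length ts \<and> p \<in> poss (ts ! i)}"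
  by (auto simp: set_zip)

declare poss.simps(2)[simp del]
declare poss_Fun[simp]

lemma Nil_poss[simp]: "[] \<in> poss t" by (cases t) auto

lemma poss_subst: "p \<in> poss s \<Longrightarrow> p \<in> poss (s \<cdot> \<theta>) \<and> subt_at (s \<cdot> \<theta>) p = subt_at s p \<cdot> \<theta>
   \<and> replace_at (s \<cdot> \<theta>) p (w \<cdot> \<theta>) = replace_at s p w \<cdot> \<theta>"
proof (induction s arbitrary: p)
  case (Var x) then show ?case by simp
next
  case (Fun f ts)
  show ?case
  proof (cases p)
    case Nil then show ?thesis by simp
  next
    case (Cons i q)
    with Fun.prems have i: "i < length ts" and q: "q \<in> poss (ts ! i)" by auto
    have "ts ! i \<in> set ts" using i by simp
    from Fun.IH[OF this q] i Cons show ?thesis by (auto simp: map_update)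
  qed
qed

lemma poss_append: "q \<in> poss s \<Longrightarrow> p \<in> poss (subt_at s q) \<Longrightarrow> q @ p \<in> poss s
  \<and> subt_at s (q @ p) = subt_at (subt_at s q) p
  \<and> replace_at s (q @ p) w = replace_at s q (replace_at (subt_at s q) p w)"
proof (induction s arbitrary: q)
  case (Var x) then show ?case by simp
next
  case (Fun f ts)
  show ?case
  proof (cases q)
    case Nil then show ?thesis using Fun.prems by simp
  next
    case (Cons i q')
    with Fun.prems have i: "i < length ts" and q: "q' \<in> poss (ts ! i)" by auto
    have "ts ! i \<in> set ts" using i by simp
    from Fun.IH[OF this q] i Cons Fun.prems show ?thesis by auto
  qed
qed

fun tc :: "('f,'v) term \<Rightarrow> ('f,'v) ctxt" where
  "tc (Var x) = CVar x" | "tc (Fun f ts) = CFun f (map tc ts)"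

lemma fill_tc[simp]: "fill (tc t) w = t"
  by (induction t) (auto simp: map_idI)

lemma ctxt_pos: "has_hole c \<Longrightarrow> \<exists>q. q \<in> poss (fill c x) \<and> subt_at (fill c x) q = x
   \<and> (\<forall>w. \<exists>c'. has_hole c' \<and> replace_at (fill c x) q w = fill c' w)"
proof (induction c)
  case Hole then show ?case by (intro exI[of _ "[]"]) (auto intro: exI[of _ Hole])
next
  case (CVar y) then show ?case by simp
next
  case (CFun f cs)
  then obtain i where i: "i < length cs" "has_hole (cs ! i)" by (auto simp: in_set_conv_nth)
  then have "cs ! i \<in> set cs" by simp
  from CFun.IH[OF this i(2)] obtain q where q: "q \<in> poss (fill (cs ! i) x)" "subt_at (fill (cs ! i) x) q = x"
    and R: "\<And>w. \<exists>c'. has_hole c' \<and> replace_at (fill (cs ! i) x) q w = fill c' w" by blast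
  show ?case
  proof (intro exI[of _ "i # q"] conjI allI)
    show "i # q \<in> poss (fill (CFun f cs) x)" using i q by simp
    show "subt_at (fill (CFun f cs) x) (i # q) = x" using i q by simp
    fix w
    obtain c' where c': "has_hole c'" "replace_at (fill (cs ! i) x) q w = fill c' w" using R by blast
    let ?c = "CFun f ((map (\<lambda>c. tc (fill c x)) cs)[i := c'])"
    have "c' \<in> set ((map (\<lambda>c. tc (fill c x)) cs)[i := c'])" using i by (simp add: set_update_memI)
    then have "has_hole ?c" using c' by auto
    moreover have "replace_at (fill (CFun f cs) x) (i # q) w = fill ?c w" using i c' by (simp add: map_update o_def)
    ultimately show "\<exists>c'. has_hole c' \<and> replace_at (fill (CFun f cs) x) (i # q) w = fill c' w" by blast
  qed
qed

lemma is_subst_comp: "is_subst \<sigma> \<Longrightarrow> is_subst \<theta> \<Longrightarrow> is_subst (\<lambda>x. \<sigma> x \<cdot> \<theta>)"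
  unfolding is_subst_def
  by (rule finite_subset[of _ "{x. \<sigma> x \<noteq> Var x} \<union> {x. \<theta> x \<noteq> Var x}"]) auto

lemma part1: assumes "s' \<in> ins s" "rstep r s t" shows "\<exists>t'\<in>ins t. rstep r s' t'"
proof -
  obtain c \<theta> where c: "has_hole c" "is_subst \<theta>" "s' = fill c (s \<cdot> \<theta>)"
    using assms(1) by (auto simp: ins_def is_instance_term_def)
  obtain p u v \<sigma> where r: "r = (u,[v])" "p \<in> poss s" "is_subst \<sigma>" "subt_at s p = u \<cdot> \<sigma>"
    "t = replace_at s p (v \<cdot> \<sigma>)" using assms(2) by (auto simp: rstep_def rstep_at_def)
  obtain q where q: "q \<in> poss s'" "subt_at s' q = s \<cdot> \<theta>"
    and R: "\<And>w. \<exists>c'. has_hole c' \<and> replace_at s' q w = fill c' w" using ctxt_pos[OF c(1)] c(3) by blast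
  note P = poss_subst[OF r(2), of \<theta> "v \<cdot> \<sigma>"]
  have Q: "q @ p \<in> poss s'" "subt_at s' (q @ p) = subt_at (s \<cdot> \<theta>) p"
    "\<And>w. replace_at s' (q @ p) w = replace_at s' q (replace_at (s \<cdot> \<theta>) p w)"
    using poss_append[OF q(1)] q(2) P by auto
  define \<tau> where "\<tau> = (\<lambda>x. \<sigma> x \<cdot> \<theta>)"
  have tau: "is_subst \<tau>" using is_subst_comp[OF r(3) c(2)] by (simp add: \<tau>_def)
  obtain c' where c': "has_hole c'" "replace_at s' q (t \<cdot> \<theta>) = fill c' (t \<cdot> \<theta>)" using R by blast
  have "fill c' (t \<cdot> \<theta>) \<in> ins t" using c' c(2) by (auto simp: ins_def is_instance_term_def)
  moreover have "rstep_at r (q @ p) s' (fill c' (t \<cdot> \<theta>))"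
    unfolding rstep_at_def
    using r Q P tau c' by (auto simp: \<tau>_def subst_subst)
  ultimately show ?thesis by (auto simp: rstep_def)
qed



definition eqs_vars :: "(('f,'v) term \<times> ('f,'v) term) list \<Rightarrow> 'v set" where
  "eqs_vars E = (\<Union>e\<in>set E. vars_term (fst e) \<union> vars_term (snd e))"
definition eqs_size :: "(('f,'v) term \<times> ('f,'v) term) list \<Rightarrow> nat" where
  "eqs_size E = sum_list (map (\<lambda>e. size (fst e) + size (snd e) + 2) E)"
definition unifies :: "('v \<Rightarrow> ('f,'v) term) \<Rightarrow> (('f,'v) term \<times> ('f,'v) term) list \<Rightarrow> bool" where
  "unifies \<theta> E \<longleftrightarrow> (\<forall>e\<in>set E. fst e \<cdot> \<theta> = snd e \<cdot> \<theta>)"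

lemma finite_eqs_vars: "finite (eqs_vars E)"
  by (auto simp: eqs_vars_def finite_vars)

lemma occurs_le: "x \<in> vars_term t \<Longrightarrow> size (\<theta> x) \<le> size (t \<cdot> \<theta>)"
proof (induction t)
  case (Var y) then show ?case by simp
next
  case (Fun f ts)
  then obtain ti where ti: "ti \<in> set ts" "x \<in> vars_term ti" by auto
  then have "size (\<theta> x) \<le> size (ti \<cdot> \<theta>)" using Fun.IH by blast
  also have "size (ti \<cdot> \<theta>) \<le> size_list size (map (\<lambda>t. t \<cdot> \<theta>) ts)"
    by (rule size_list_estimation'[of "ti \<cdot> \<theta>"]) (use ti in auto)
  finally show ?case by simp
qed

lemma occurs_lt: assumes "x \<in> vars_term t" "t \<noteq> Var x" shows "size (\<theta> x) < size (t \<cdot> \<theta>)"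
proof (cases t)
  case (Var y) then show ?thesis using assms by simp
next
  case (Fun f ts)
  then obtain ti where ti: "ti \<in> set ts" "x \<in> vars_term ti" using assms by auto
  have "size (\<theta> x) \<le> size (ti \<cdot> \<theta>)" by (rule occurs_le[OF ti(2)])
  also have "size (ti \<cdot> \<theta>) \<le> size_list size (map (\<lambda>t. t \<cdot> \<theta>) ts)"
    by (rule size_list_estimation'[of "ti \<cdot> \<theta>"]) (use ti in auto)
  finally show ?thesis using Fun by simp
qed

lemma zip_facts: "length ss = length ts \<Longrightarrow>
   eqs_vars (zip ss ts) = (\<Union>t\<in>set ss. vars_term t) \<union> (\<Union>t\<in>set ts. vars_term t)
   \<and> eqs_size (zip ss ts) = size_list size ss + size_list size ts
   \<and> (unifies \<tau> (zip ss ts) \<longleftrightarrow> map (\<lambda>t. t \<cdot> \<tau>) ss = map (\<lambda>t. t \<cdot> \<tau>) ts)"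
  by (induction ss ts rule: list_induct2) (auto simp: eqs_vars_def eqs_size_def unifies_def)

lemma unify_main:
  "unifies \<theta> E \<Longrightarrow> \<exists>\<eta>. is_subst \<eta> \<and> unifies \<eta> E \<and> (\<forall>\<tau>. unifies \<tau> E \<longrightarrow> (\<forall>x. \<tau> x = \<eta> x \<cdot> \<tau>))"
proof (induction E arbitrary: \<theta> rule: wf_induct[OF wf_measures[of "[\<lambda>E. card (eqs_vars E), eqs_size]"]])
  case (1 E)
  have IH: "\<And>E' \<theta>'. (E', E) \<in> measures [\<lambda>E. card (eqs_vars E), eqs_size] \<Longrightarrow> unifies \<theta>' E' \<Longrightarrow>
     \<exists>\<eta>. is_subst \<eta> \<and> unifies \<eta> E' \<and> (\<forall>\<tau>. unifies \<tau> E' \<longrightarrow> (\<forall>x. \<tau> x = \<eta> x \<cdot> \<tau>))"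
    using 1(1) by blast
  show ?case
  proof (cases E)
    case Nil
    then show ?thesis by (intro exI[of _ Var]) (auto simp: is_subst_def unifies_def)
  next
    case (Cons e E0)
    obtain s t where e: "e = (s,t)" by force
    have uE: "unifies \<theta> E0" "s \<cdot> \<theta> = t \<cdot> \<theta>" using 1(2) Cons e by (auto simp: unifies_def)
    have uiff: "\<And>\<tau>. unifies \<tau> E \<longleftrightarrow> s \<cdot> \<tau> = t \<cdot> \<tau> \<and> unifies \<tau> E0"
      using Cons e by (auto simp: unifies_def)
    have vE: "eqs_vars E = vars_term s \<union> vars_term t \<union> eqs_vars E0"
      using Cons e by (auto simp: eqs_vars_def)
    have sE: "eqs_size E = size s + size t + 2 + eqs_size E0"
      using Cons e by (auto simp: eqs_size_def)
    show ?thesis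
    proof (cases "s = t")
      case True
      have "card (eqs_vars E0) \<le> card (eqs_vars E)"
        using vE finite_eqs_vars by (intro card_mono) (auto simp: finite_vars)
      then have "(E0, E) \<in> measures [\<lambda>E. card (eqs_vars E), eqs_size]"
        using sE by (intro measures_lesseq measures_less) auto
      from IH[OF this uE(1)] obtain \<eta> where "is_subst \<eta>" "unifies \<eta> E0"
        "\<forall>\<tau>. unifies \<tau> E0 \<longrightarrow> (\<forall>x. \<tau> x = \<eta> x \<cdot> \<tau>)" by blast
      then show ?thesis using uiff True by metis
    next
      case st: False
      show ?thesis
      proof (cases "(\<exists>x. s = Var x) \<or> (\<exists>x. t = Var x)")
        case True
        then obtain x u where xu: "(s = Var x \<and> u = t) \<or> (t = Var x \<and> u = s)" by blast
        have ne: "u \<noteq> Var x" using xu st by auto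
        have unif_iff: "\<And>\<tau>. (s \<cdot> \<tau> = t \<cdot> \<tau>) \<longleftrightarrow> (\<tau> x = u \<cdot> \<tau>)" using xu by auto
        have nx: "x \<notin> vars_term u" using occurs_lt[OF _ ne, of \<theta>] uE(2) unif_iff by force
        define \<sigma> where "\<sigma> = Var(x := u)"
        define E' where "E' = map (\<lambda>e. (fst e \<cdot> \<sigma>, snd e \<cdot> \<sigma>)) E0"
        have key: "a \<cdot> \<sigma> \<cdot> \<tau> = a \<cdot> \<tau>" if "\<tau> x = u \<cdot> \<tau>" for a \<tau>
          unfolding subst_subst by (rule subst_cong) (use that in \<open>auto simp: \<sigma>_def\<close>)
        have uE': "unifies \<tau> E'" if "\<tau> x = u \<cdot> \<tau>" "unifies \<tau> E0" for \<tau>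
          using that key[OF that(1)] by (auto simp: unifies_def E'_def)
        have vs: "vars_term (a \<cdot> \<sigma>) \<subseteq> (vars_term a - {x}) \<union> vars_term u" for a
          by (auto simp: vars_subst \<sigma>_def split: if_splits)
        have "eqs_vars E' \<subseteq> eqs_vars E - {x}"
        proof -
          have "eqs_vars E' \<subseteq> (eqs_vars E0 - {x}) \<union> vars_term u"
          proof
            fix y assume "y \<in> eqs_vars E'"
            then obtain e where e: "e \<in> set E0" "y \<in> vars_term (fst e \<cdot> \<sigma>) \<union> vars_term (snd e \<cdot> \<sigma>)"
              by (auto simp: E'_def eqs_vars_def)
            have "vars_term (fst e) \<union> vars_term (snd e) \<subseteq> eqs_vars E0"
              using e(1) by (auto simp: eqs_vars_def)
            then show "y \<in> (eqs_vars E0 - {x}) \<union> vars_term u"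
              using e(2) vs[of "fst e"] vs[of "snd e"] by blast
          qed
          moreover have "vars_term u \<subseteq> eqs_vars E" using xu vE by blast
          moreover have "eqs_vars E0 \<subseteq> eqs_vars E" using vE by blast
          ultimately show ?thesis using nx by blast
        qed
        moreover have "x \<in> eqs_vars E" using xu vE by fastforce
        ultimately have "eqs_vars E' \<subset> eqs_vars E" by blast
        then have "card (eqs_vars E') < card (eqs_vars E)"
          by (intro psubset_card_mono finite_eqs_vars)
        then have "(E', E) \<in> measures [\<lambda>E. card (eqs_vars E), eqs_size]"
          by (intro measures_less) auto
        have "\<theta> x = u \<cdot> \<theta>" using uE(2) unif_iff by simp
        from IH[OF \<open>(E', E) \<in> _\<close> uE'[OF this uE(1)]] obtain \<eta>' where
          h: "is_subst \<eta>'" "unifies \<eta>' E'" "\<forall>\<tau>. unifies \<tau> E' \<longrightarrow> (\<forall>x. \<tau> x = \<eta>' x \<cdot> \<tau>)" by blast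
        define \<eta> where "\<eta> = (\<lambda>y. \<sigma> y \<cdot> \<eta>')"
        have "is_subst \<eta>"
          unfolding is_subst_def \<eta>_def
          by (rule finite_subset[of _ "insert x {y. \<eta>' y \<noteq> Var y}"]) (use h(1) in \<open>auto simp: \<sigma>_def is_subst_def\<close>)
        moreover have "unifies \<eta> E"
        proof -
          have "u \<cdot> \<sigma> = u" using nx by (intro trans[OF subst_cong subst_Var]) (auto simp: \<sigma>_def)
          have "u \<cdot> \<eta> = u \<cdot> \<sigma> \<cdot> \<eta>'" by (simp add: \<eta>_def subst_subst)
          also have "\<dots> = u \<cdot> \<eta>'" using \<open>u \<cdot> \<sigma> = u\<close> by simp
          also have "\<dots> = \<eta> x" by (simp add: \<eta>_def \<sigma>_def)
          finally have "\<eta> x = u \<cdot> \<eta>" by simp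
          moreover have "unifies \<eta> E0" using h(2)
            by (auto simp: unifies_def E'_def \<eta>_def subst_subst)
          ultimately show ?thesis using uiff[of \<eta>] unif_iff[of \<eta>] by simp
        qed
        moreover have "\<forall>x. \<tau> x = \<eta> x \<cdot> \<tau>" if "unifies \<tau> E" for \<tau>
        proof
          fix y
          have tx: "\<tau> x = u \<cdot> \<tau>" using that uiff[of \<tau>] unif_iff[of \<tau>] by simp
          have "unifies \<tau> E0" using that uiff[of \<tau>] by simp
          then have "unifies \<tau> E'" using uE' tx by simp
          then have ht: "\<And>z. \<tau> z = \<eta>' z \<cdot> \<tau>" using h(3) by blast
          have "\<eta> y \<cdot> \<tau> = \<sigma> y \<cdot> (\<lambda>z. \<eta>' z \<cdot> \<tau>)" by (simp add: \<eta>_def subst_subst)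
          also have "(\<lambda>z. \<eta>' z \<cdot> \<tau>) = \<tau>" using ht by auto
          also have "\<sigma> y \<cdot> \<tau> = \<tau> y" using tx by (simp add: \<sigma>_def)
          finally show "\<tau> y = \<eta> y \<cdot> \<tau>" by simp
        qed
        ultimately show ?thesis by blast
      next
        case False
        then obtain f ss g ts where ft: "s = Fun f ss" "t = Fun g ts" by (cases s; cases t) auto
        from uE(2) ft have fg: "f = g" and len: "length ss = length ts" by (auto dest: map_eq_imp_length_eq)
        define E' where "E' = zip ss ts @ E0"
        note Z = zip_facts[OF len]
        have uE': "unifies \<tau> E' \<longleftrightarrow> unifies \<tau> E" for \<tau>
        proof -
          have a: "unifies \<tau> E' = (unifies \<tau> (zip ss ts) \<and> unifies \<tau> E0)"
            by (auto simp: E'_def unifies_def)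
          show ?thesis using a Z[of \<tau>] uiff[of \<tau>] ft fg by simp
        qed
        have "eqs_vars E' = eqs_vars E" using Z vE ft by (auto simp: E'_def eqs_vars_def)
        moreover have "eqs_size E' < eqs_size E" using Z sE ft
          by (simp add: E'_def eqs_size_def)
        ultimately have "(E', E) \<in> measures [\<lambda>E. card (eqs_vars E), eqs_size]"
          by (intro measures_lesseq measures_less) auto
        have "unifies \<theta> E'" using uE' 1(2) by simp
        from IH[OF \<open>(E', E) \<in> _\<close> this] show ?thesis unfolding uE' .
      qed
    qed
  qed
qed

lemma mgu_exists: "s \<cdot> \<theta> = t \<cdot> \<theta> \<Longrightarrow> \<exists>\<eta>. is_mgu \<eta> s t \<and> (\<forall>\<tau>. s \<cdot> \<tau> = t \<cdot> \<tau> \<longrightarrow> (\<forall>x. \<tau> x = \<eta> x \<cdot> \<tau>))"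
  using unify_main[of \<theta> "[(s,t)]"] unfolding is_mgu_def unifies_def by auto



definition sw :: "'v \<Rightarrow> 'v \<Rightarrow> 'v \<Rightarrow> 'v" where
  "sw a b x = (if x = a then b else if x = b then a else x)"

lemma sw_sw: "sw a b (sw a b x) = x" by (simp add: sw_def)

lemma bij_sw: "bij (sw a b)"
  by (rule bij_betw_byWitness[of UNIV "sw a b"]) (simp_all add: sw_sw)

lemma sw_other: "x \<noteq> a \<Longrightarrow> x \<noteq> b \<Longrightarrow> sw a b x = x" by (simp add: sw_def)

lemma fresh_perm:
  assumes "finite A" "finite B" "infinite (UNIV :: 'v set)"
  shows "\<exists>\<pi> :: 'v \<Rightarrow> 'v. bij \<pi> \<and> finite {x. \<pi> x \<noteq> x} \<and> \<pi> ` A \<inter> B = {}"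
  using assms(1)
proof (induction A rule: finite_induct)
  case empty
  have "bij (id :: 'v \<Rightarrow> 'v)" by (rule bij_id)
  moreover have "finite {x. id x \<noteq> (x::'v)}" by simp
  ultimately show ?case by blast
next
  case (insert a A)
  then obtain \<pi> where p: "bij \<pi>" "finite {x. \<pi> x \<noteq> x}" "\<pi> ` A \<inter> B = {}" by blast
  have fin: "finite (B \<union> \<pi> ` A \<union> {\<pi> a})" using assms(2) insert(1) by simp
  from ex_new_if_finite[OF assms(3) fin] obtain z where z: "z \<notin> B \<union> \<pi> ` A \<union> {\<pi> a}" by (rule exE)
  define \<pi>' where "\<pi>' = sw (\<pi> a) z \<circ> \<pi>"
  have "bij \<pi>'" unfolding \<pi>'_def using p(1) bij_sw by (rule bij_comp)
  moreover have "finite {x. \<pi>' x \<noteq> x}"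
  proof (rule finite_subset[of _ "{x. \<pi> x \<noteq> x} \<union> {\<pi> a, z}"])
    show "{x. \<pi>' x \<noteq> x} \<subseteq> {x. \<pi> x \<noteq> x} \<union> {\<pi> a, z}"
    proof
      fix x assume "x \<in> {x. \<pi>' x \<noteq> x}"
      then have ne: "sw (\<pi> a) z (\<pi> x) \<noteq> x" by (simp add: \<pi>'_def)
      show "x \<in> {x. \<pi> x \<noteq> x} \<union> {\<pi> a, z}"
      proof (cases "\<pi> x = x")
        case True
        then have "sw (\<pi> a) z x \<noteq> x" using ne by simp
        then have "x = \<pi> a \<or> x = z" using sw_other by metis
        then show ?thesis by blast
      qed simp
    qed
    show "finite ({x. \<pi> x \<noteq> x} \<union> {\<pi> a, z})" using p(2) by simp
  qed
  moreover have "\<pi>' ` insert a A \<inter> B = {}"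
  proof -
    have "\<pi>' a = z" by (simp add: \<pi>'_def sw_def)
    moreover have "\<pi>' y = \<pi> y" if "y \<in> A" for y
    proof -
      have "\<pi> y \<noteq> \<pi> a" using that insert(2) bij_is_inj[OF p(1)] by (metis injD)
      moreover have "\<pi> y \<noteq> z" using z that by auto
      ultimately show ?thesis by (simp add: \<pi>'_def sw_other)
    qed
    moreover have "z \<notin> B" using z by blast
    moreover have "\<pi> y \<notin> B" if "y \<in> A" for y using p(3) that by blast
    ultimately show ?thesis by auto
  qed
  ultimately show ?case by blast
qed
lemma finite_vars_goal: "finite (vars_goal ss)"
  by (simp add: vars_goal_def finite_vars)

lemma part2:
  fixes r :: "('f, 'v) rule"
  assumes inf: "infinite (UNIV :: 'v set)" and a: "ss' \<in> mg ss" "nstep r ss ts"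
  shows "\<exists>ts'\<in>mg ts. nstep r ss' ts'"
proof -
  obtain pre ts0 post \<delta> where ss': "ss' = pre @ ts0 @ post" "is_subst \<delta>" "ss = goal_subst ts0 \<delta>"
    using a(1) by (auto simp: mg_def is_instance_goal_def)
  obtain u vs where r: "r = (u, vs)" by force
  obtain i \<rho> \<eta> where i: "1 \<le> i" "i \<le> length ss" and \<rho>: "is_renaming \<rho>"
    and mgu: "is_mgu \<eta> (ss ! (i - 1)) (u \<cdot> \<rho>)"
    and ts: "ts = goal_subst (take (i - 1) ss @ goal_subst vs \<rho> @ drop i ss) \<eta>"
    using a(2) r by (auto simp: nstep_def nstep_at_def)
  define A where "A = vars_term u \<union> vars_goal vs"
  have finA: "finite A" by (simp add: A_def finite_vars finite_vars_goal)
  obtain \<pi> where \<pi>: "bij \<pi>" "finite {x. \<pi> x \<noteq> x}" "\<pi> ` A \<inter> vars_goal ss' = {}"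
    using fresh_perm[OF finA finite_vars_goal inf] by blast
  define \<rho>' where "\<rho>' = (\<lambda>x. Var (\<pi> x) :: ('f,'v) term)"
  have ren: "is_renaming \<rho>'" unfolding is_renaming_def is_subst_def \<rho>'_def using \<pi> by auto
  have vr: "vars_term (t \<cdot> \<rho>') = \<pi> ` vars_term t" for t by (auto simp: vars_subst \<rho>'_def)
  have vg: "vars_goal (goal_subst vs \<rho>') = \<pi> ` vars_goal vs"
    by (auto simp: vars_goal_def goal_subst_def vr)
  have dis': "(vars_term (u \<cdot> \<rho>') \<union> vars_goal (goal_subst vs \<rho>')) \<inter> vars_goal ss' = {}"
    using \<pi>(3) unfolding vr vg A_def by blast
  have len: "length ts0 = length ss" by (simp add: ss' goal_subst_def)
  define k where "k = length pre + i"
  have km: "k - 1 = length pre + (i - 1)" using i by (simp add: k_def)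
  have il: "i - 1 < length ts0" using i len by simp
  have nth: "ss' ! (k - 1) = ts0 ! (i - 1)" unfolding km ss' using il
    by (simp add: nth_append)
  have tk: "take (k - 1) ss' = pre @ take (i - 1) ts0" using i len by (simp add: ss' k_def)
  have dk: "drop k ss' = drop i ts0 @ post" using i len by (simp add: ss' k_def)
  have vts0: "vars_goal ts0 \<subseteq> vars_goal ss'" by (auto simp: ss' vars_goal_def)
  define \<theta> where "\<theta> = (\<lambda>y. if y \<in> vars_goal ts0 then \<delta> y \<cdot> \<eta>
      else if y \<in> \<pi> ` A then \<rho> (inv \<pi> y) \<cdot> \<eta> else Var y)"
  have \<theta>1: "t \<cdot> \<theta> = t \<cdot> \<delta> \<cdot> \<eta>" if "vars_term t \<subseteq> vars_goal ts0" for t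
    unfolding subst_subst by (rule subst_cong) (use that in \<open>auto simp: \<theta>_def\<close>)
  have \<theta>2: "t \<cdot> \<rho>' \<cdot> \<theta> = t \<cdot> \<rho> \<cdot> \<eta>" if "vars_term t \<subseteq> A" for t
    unfolding subst_subst
  proof (rule subst_cong)
    fix x assume "x \<in> vars_term t"
    then have x: "x \<in> A" using that by blast
    then have "\<pi> x \<notin> vars_goal ts0" using \<pi>(3) vts0 by blast
    then show "\<rho>' x \<cdot> \<theta> = \<rho> x \<cdot> \<eta>"
      using x by (simp add: \<rho>'_def \<theta>_def bij_is_inj[OF \<pi>(1)])
  qed
  have is\<theta>: "is_subst \<theta>" unfolding is_subst_def
    by (rule finite_subset[of _ "vars_goal ts0 \<union> \<pi> ` A"]) (auto simp: \<theta>_def finite_vars_goal finA)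
  have ti: "ts0 ! (i - 1) \<in> set ts0" using i len by simp
  have uA: "vars_term u \<subseteq> A" by (simp add: A_def)
  have unif: "ts0 ! (i - 1) \<cdot> \<theta> = u \<cdot> \<rho>' \<cdot> \<theta>"
  proof -
    have "ts0 ! (i - 1) \<cdot> \<theta> = ts0 ! (i - 1) \<cdot> \<delta> \<cdot> \<eta>"
      using ti by (intro \<theta>1) (auto simp: vars_goal_def)
    also have "\<dots> = ss ! (i - 1) \<cdot> \<eta>" using il unfolding ss'(3) goal_subst_def by simp
    also have "\<dots> = u \<cdot> \<rho> \<cdot> \<eta>" using mgu by (simp add: is_mgu_def)
    also have "\<dots> = u \<cdot> \<rho>' \<cdot> \<theta>" using \<theta>2[OF uA] by simp
    finally show ?thesis .
  qed
  obtain \<eta>' where \<eta>': "is_mgu \<eta>' (ts0 ! (i - 1)) (u \<cdot> \<rho>')"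
    "\<forall>\<tau>. ts0 ! (i - 1) \<cdot> \<tau> = u \<cdot> \<rho>' \<cdot> \<tau> \<longrightarrow> (\<forall>x. \<tau> x = \<eta>' x \<cdot> \<tau>)"
    using mgu_exists[OF unif] by blast
  have "\<forall>x. \<theta> x = \<eta>' x \<cdot> \<theta>" using \<eta>'(2) unif by simp
  then have \<theta>\<eta>': "(\<lambda>x. \<eta>' x \<cdot> \<theta>) = \<theta>" by (simp add: fun_eq_iff)
  define M where "M = take (i - 1) ts0 @ goal_subst vs \<rho>' @ drop i ts0"
  define ts' where "ts' = goal_subst (take (k - 1) ss' @ goal_subst vs \<rho>' @ drop k ss') \<eta>'"
  have "nstep_at r k ss' ts'"
  proof -
    have c1: "1 \<le> k" using i by (simp add: k_def)
    have c2: "k \<le> length ss'" using i len by (simp add: k_def ss')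
    have c4: "(vars_term (fst r \<cdot> \<rho>') \<union> vars_goal (goal_subst (snd r) \<rho>')) \<inter> vars_goal ss' = {}"
      using dis' r by simp
    have c5: "is_mgu \<eta>' (ss' ! (k - 1)) (fst r \<cdot> \<rho>')" using \<eta>'(1) nth r by simp
    have c6: "ts' = goal_subst (take (k - 1) ss' @ goal_subst (snd r) \<rho>' @ drop k ss') \<eta>'"
      using r by (simp add: ts'_def)
    show ?thesis unfolding nstep_at_def using c1 c2 ren c4 c5 c6 by blast
  qed
  then have "nstep r ss' ts'" unfolding nstep_def by (rule exI)
  moreover have "ts' \<in> mg ts"
  proof -
    have e1: "ts' = goal_subst pre \<eta>' @ goal_subst M \<eta>' @ goal_subst post \<eta>'"
      unfolding ts'_def tk dk M_def goal_subst_def by simp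
    have "goal_subst (goal_subst M \<eta>') \<theta> = goal_subst M \<theta>"
      by (simp add: goal_subst_def subst_subst \<theta>\<eta>')
    also have "\<dots> = ts"
    proof -
      have m1: "map (\<lambda>t. t \<cdot> \<theta>) (take (i - 1) ts0) = map (\<lambda>t. t \<cdot> \<eta>) (take (i - 1) ss)"
        unfolding ss' goal_subst_def take_map map_map o_def
        by (rule map_cong[OF refl], rule \<theta>1) (auto simp: vars_goal_def dest: in_set_takeD)
      have m2: "map (\<lambda>t. t \<cdot> \<theta>) (drop i ts0) = map (\<lambda>t. t \<cdot> \<eta>) (drop i ss)"
        unfolding ss' goal_subst_def drop_map map_map o_def
        by (rule map_cong[OF refl], rule \<theta>1) (auto simp: vars_goal_def dest: in_set_dropD)
      have m3: "map (\<lambda>t. t \<cdot> \<theta>) (goal_subst vs \<rho>') = map (\<lambda>t. t \<cdot> \<eta>) (goal_subst vs \<rho>)"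
        unfolding goal_subst_def map_map o_def
        by (rule map_cong[OF refl], rule \<theta>2) (auto simp: A_def vars_goal_def)
      show ?thesis using m1 m2 m3 by (simp add: ts M_def goal_subst_def)
    qed
    finally have "is_instance_goal ts (goal_subst M \<eta>')"
      using is\<theta> unfolding is_instance_goal_def by metis
    then show ?thesis using e1 unfolding mg_def by blast
  qed
  ultimately show ?thesis by blast
qed


theorem lemma5:
  fixes r :: "('f, 'v :: countable) rule"
  assumes "infinite (UNIV :: 'v set)"
  shows "(\<forall>s s' t. s' \<in> ins s \<and> rstep r s t \<longrightarrow> (\<exists>t' \<in> ins t. rstep r s' t'))
       \<and> (\<forall>ss ss' ts. ss' \<in> mg ss \<and> nstep r ss ts \<longrightarrow> (\<exists>ts' \<in> mg ts. nstep r ss' ts'))"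
  using part1[of _ _ r] part2[OF assms, of _ _ r] by blast

end
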